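(* Let $(\eta_k)_{k\in\mathbb{N}}$ be independent identically distributed random variables with values in $\mathbb{N}$, and let $$\eta=\sum_{k=1}^\infty\frac{(-1)^{k-1}}{\eta_1(\eta_1+\eta_2)\cdots(\eta_1+\eta_2+\dots+\eta_k)}.$$ Then the distribution of $\eta$ is pure (purely discrete or purely singularly continuous), and it cannot be absolutely continuous with respect to Lebesgue measure. *)

theory Defs
  imports "HOL-Probability.Probability"
begin

text \<open>The alternating series  sum_{k>=1} (-1)^(k-1) / (a_1 (a_1+a_2) ... (a_1+...+a_k)),
  written with 0-based indices: a 0 plays the role of eta_1.\<close>
definition alt_series :: "(nat \<Rightarrow> nat) \<Rightarrow> real" where
  "alt_series a = (\<Sum>k. (-1) ^ k / (\<Prod>j\<le>k. real (\<Sum>i\<le>j. a i)))"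

definition purely_discrete :: "real measure \<Rightarrow> bool" where
  "purely_discrete \<mu> \<longleftrightarrow> (\<exists>S. countable S \<and> emeasure \<mu> S = emeasure \<mu> UNIV)"

definition purely_singular_continuous :: "real measure \<Rightarrow> bool" where
  "purely_singular_continuous \<mu> \<longleftrightarrow>
     (\<forall>x. emeasure \<mu> {x} = 0) \<and>
     (\<exists>N \<in> sets borel. emeasure lborel N = 0 \<and> emeasure \<mu> N = emeasure \<mu> UNIV)"

end

theory Submission
  imports Defs
begin

definition pos :: "(nat \<Rightarrow> nat) \<Rightarrow> bool" where "pos a \<longleftrightarrow> (\<forall>i. a i \<ge> 1)"

definition cc :: "nat \<Rightarrow> (nat \<Rightarrow> nat) \<Rightarrow> nat \<Rightarrow> real" where
  "cc B a k = 1 / (\<Prod>j\<le>k. real (B + (\<Sum>i\<le>j. a i)))"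

definition hh :: "nat \<Rightarrow> (nat \<Rightarrow> nat) \<Rightarrow> real" where
  "hh B a = (\<Sum>k. (-1)^k * cc B a k)"

lemma alt_series_hh: "alt_series a = hh 0 a"
  unfolding alt_series_def hh_def cc_def by (simp add: divide_inverse)

lemma sum_ge: "pos a \<Longrightarrow> (\<Sum>i\<le>j. a i) \<ge> Suc j"
proof -
  assume "pos a"
  hence "(\<Sum>i\<le>j. (1::nat)) \<le> (\<Sum>i\<le>j. a i)" by (intro sum_mono) (auto simp: pos_def)
  thus ?thesis by simp
qed

lemma prod_ge: "pos a \<Longrightarrow> (\<Prod>j\<le>k. real (B + (\<Sum>i\<le>j. a i))) \<ge> real (Suc k)"
proof (induction k)
  case 0 then show ?case using sum_ge[of a 0] by simp
next
  case (Suc k)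
  have n: "Suc (Suc k) \<le> B + (\<Sum>i\<le>Suc k. a i)" using sum_ge[OF Suc.prems, of "Suc k"] by linarith
  have f: "real (B + (\<Sum>i\<le>Suc k. a i)) \<ge> real (Suc (Suc k))" using of_nat_le_iff[THEN iffD2, OF n] .
  have "(\<Prod>j\<le>Suc k. real (B + (\<Sum>i\<le>j. a i))) = (\<Prod>j\<le>k. real (B + (\<Sum>i\<le>j. a i))) * real (B + (\<Sum>i\<le>Suc k. a i))"
    by simp
  also have "\<dots> \<ge> 1 * real (Suc (Suc k))"
    using Suc f by (intro mult_mono) auto
  finally show ?case by simp
qed

lemma cc_pos: "pos a \<Longrightarrow> cc B a k > 0"
  using prod_ge[of a k B] unfolding cc_def by simp

lemma cc_Suc: "cc B a (Suc k) = cc B a k / real (B + (\<Sum>i\<le>Suc k. a i))"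
  unfolding cc_def by simp

lemma cc_mono: "pos a \<Longrightarrow> cc B a (Suc k) \<le> cc B a k"
proof -
  assume p: "pos a"
  have n: "1 \<le> B + (\<Sum>i\<le>Suc k. a i)" using sum_ge[OF p, of "Suc k"] by linarith
  have "real (B + (\<Sum>i\<le>Suc k. a i)) \<ge> 1" using of_nat_le_iff[THEN iffD2, OF n] by simp
  thus ?thesis unfolding cc_Suc using cc_pos[OF p, of B k]
    by (simp add: divide_le_eq_1 divide_le_eq mult_le_cancel_left1)
qed

lemma cc_le: "pos a \<Longrightarrow> cc B a k \<le> 1 / real (Suc k)"
  unfolding cc_def using prod_ge[of a k B] by (intro divide_left_mono) auto

lemma cc_lim: "pos a \<Longrightarrow> cc B a \<longlonglongrightarrow> 0"
proof -
  assume p: "pos a"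
  have "(\<lambda>k. 1 / real (Suc k)) \<longlonglongrightarrow> 0"
    using LIMSEQ_Suc[OF lim_inverse_n'] by simp
  thus ?thesis
  proof (rule Lim_null_comparison[rotated])
    show "eventually (\<lambda>k. norm (cc B a k) \<le> 1 / real (Suc k)) sequentially"
      by (intro always_eventually allI) (metis abs_of_pos cc_pos cc_le p real_norm_def)
  qed
qed

lemma leib: assumes "pos a"
  shows "summable (\<lambda> n. (-1)^n * cc B a n)"
    and "\<And>n. (\<Sum>i<2*n. (-1)^i*cc B a i) \<le> (\<Sum>i. (-1)^i*cc B a i)"
    and "\<And>n. (\<Sum>i. (-1)^i*cc B a i) \<le> (\<Sum>i<2*n+1. (-1)^i*cc B a i)"
  using summable_Leibniz'[of "cc B a", OF cc_lim[OF assms] less_imp_le[OF cc_pos[OF assms]] cc_mono[OF assms]]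
  by auto

lemma hh_summable: "pos a \<Longrightarrow> summable (\<lambda>k. (-1)^k * cc B a k)"
  using leib(1) .

lemma hh_lower1: "pos a \<Longrightarrow> cc B a 0 - cc B a 1 \<le> hh B a"
  using leib(2)[of a B 1] unfolding hh_def by (simp add: numeral_2_eq_2)

lemma hh_upper0: "pos a \<Longrightarrow> hh B a \<le> cc B a 0"
  using leib(3)[of a B 0] unfolding hh_def by simp

lemma hh_upper1: "pos a \<Longrightarrow> hh B a \<le> cc B a 0 - cc B a 1 + cc B a 2"
  using leib(3)[of a B 1] unfolding hh_def by (simp add: numeral_3_eq_3 numeral_2_eq_2)

lemma cc_shift: "cc B a (Suc k) = cc (B + a 0) (\<lambda>i. a (Suc i)) k / real (B + a 0)"
proof -
  have e: "\<And>j. (\<Sum>i\<le>Suc j. a i) = a 0 + (\<Sum>i\<le>j. a (Suc i))" by (rule sum.atMost_Suc_shift)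
  have "(\<Prod>j\<le>Suc k. real (B + (\<Sum>i\<le>j. a i))) = real (B + (\<Sum>i\<le>0. a i)) * (\<Prod>j\<le>k. real (B + (\<Sum>i\<le>Suc j. a i)))"
    by (rule prod.atMost_Suc_shift)
  also have "\<dots> = real (B + a 0) * (\<Prod>j\<le>k. real (B + a 0 + (\<Sum>i\<le>j. a (Suc i))))"
    by (simp only: e add.assoc) simp
  finally have "(\<Prod>j\<le>Suc k. real (B + (\<Sum>i\<le>j. a i))) =
        real (B + a 0) * (\<Prod>j\<le>k. real (B + a 0 + (\<Sum>i\<le>j. a (Suc i))))" .
  thus ?thesis unfolding cc_def by simp
qed

lemma pos_ge1: "pos a \<Longrightarrow> 1 \<le> real (a i)" unfolding pos_def by simp

lemma pos_shift: "pos a \<Longrightarrow> pos (\<lambda>i. a (Suc i))" unfolding pos_def by auto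

lemma hh_rec: "pos a \<Longrightarrow> hh B a = (1 - hh (B + a 0) (\<lambda>i. a (Suc i))) / real (B + a 0)"
proof -
  assume p: "pos a"
  let ?f = "\<lambda>k. (-1)^k * cc B a k"
  have s: "summable ?f" using hh_summable[OF p] .
  have s2: "summable (\<lambda>k. (-1)^k * cc (B + a 0) (\<lambda>i. a (Suc i)) k)" using hh_summable[OF pos_shift[OF p]] .
  have "(\<Sum>k. ?f (Suc k)) = hh B a - ?f 0" using suminf_split_head[OF s] unfolding hh_def .
  have e1: "(\<lambda>k. ?f (Suc k)) = (\<lambda>k. (-1)^k * cc (B + a 0) (\<lambda>i. a (Suc i)) k * (- 1 / real (B + a 0)))"
    by (simp add: cc_shift)
  have e2: "(\<Sum>k. (-1)^k * cc (B + a 0) (\<lambda>i. a (Suc i)) k * (- 1 / real (B + a 0)))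
     = hh (B + a 0) (\<lambda>i. a (Suc i)) * (- 1 / real (B + a 0))"
    unfolding hh_def by (rule suminf_mult2[OF s2, symmetric])
  have e3: "?f 0 = 1 / real (B + a 0)" by (simp add: cc_def)
  have "hh B a = 1 / real (B + a 0) + hh (B + a 0) (\<lambda>i. a (Suc i)) * (- 1 / real (B + a 0))"
    using e1 e2 e3 \<open>(\<Sum>k. ?f (Suc k)) = hh B a - ?f 0\<close> by simp
  thus ?thesis by (simp add: diff_divide_distrib)
qed

lemma hh_pos: "pos a \<Longrightarrow> hh B a > 0"
proof -
  assume p: "pos a"
  have "cc B a 1 < cc B a 0"
  proof -
    have "real (B + (\<Sum>i\<le>Suc 0. a i)) > 1" using sum_ge[OF p, of 1] by simp
    thus ?thesis using cc_Suc[of B a 0] cc_pos[OF p, of B 0]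
      by (simp add: divide_less_eq)
  qed
  thus ?thesis using hh_lower1[OF p, of B] by simp
qed

lemma hh_le: "pos a \<Longrightarrow> hh B a \<le> 1 / real (B + a 0)"
  using hh_upper0[of a B] by (simp add: cc_def)

lemma hh_bounds: "pos a \<Longrightarrow> 1 / real (B + a 0 + 1) \<le> hh B a \<and> hh B a < 1 / real (B + a 0)"
proof -
  assume p: "pos a"
  let ?C = "real (B + a 0)"
  let ?t = "hh (B + a 0) (\<lambda>i. a (Suc i))"
  have C: "?C \<ge> 1" using pos_ge1[OF p, of 0] by simp
  have t0: "?t > 0" using hh_pos[OF pos_shift[OF p]] .
  have t1: "?t \<le> 1 / (?C + 1)"
  proof -
    have "?t \<le> 1 / real (B + a 0 + a (Suc 0))" using hh_le[OF pos_shift[OF p], of "B + a 0"] by simp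
    also have "\<dots> \<le> 1 / (?C + 1)" using p C by (intro divide_left_mono) (auto simp: pos_def)
    finally show ?thesis .
  qed
  have e: "hh B a = (1 - ?t) / ?C" using hh_rec[OF p] .
  have "1 / (?C + 1) \<le> (1 - ?t) / ?C"
    using t1 C by (simp add: field_simps)
  moreover have "(1 - ?t) / ?C < 1 / ?C" using t0 C by (simp add: divide_strict_right_mono)
  moreover have "real (B + a 0 + 1) = ?C + 1" by simp
  ultimately show ?thesis using e by metis
qed

lemma hh_head: "pos a \<Longrightarrow> pos b \<Longrightarrow> hh B a = hh B b \<Longrightarrow> a 0 = b 0"
proof (rule ccontr)
  assume p: "pos a" "pos b" "hh B a = hh B b" "a 0 \<noteq> b 0"
  { fix a b assume p: "pos a" "pos b" "hh B a = hh B b" "a 0 < b 0"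
    have "hh B b < 1 / real (B + b 0)" using hh_bounds[OF p(2)] by blast
    also have "\<dots> \<le> 1 / real (B + a 0 + 1)" using p by (intro divide_left_mono) (auto simp: pos_def)
    also have "\<dots> \<le> hh B a" using hh_bounds[OF p(1)] by blast
    finally have False using p(3) by simp }
  note * = this
  show False
  proof (cases "a 0 < b 0")
    case True then show ?thesis using *[of a b] p by auto
  next
    case False then have "b 0 < a 0" using p(4) by linarith
    then show ?thesis using *[of b a] p by auto
  qed
qed

lemma hh_inj: "pos a \<Longrightarrow> pos b \<Longrightarrow> hh B a = hh B b \<Longrightarrow> a k = b k"
proof (induction k arbitrary: B a b)
  case 0
  then show ?case using hh_head by blast
next
  case (Suc k)
  have h0: "a 0 = b 0" using hh_head Suc.prems by blast
  have C: "real (B + a 0) > 0" using pos_ge1[OF Suc.prems(1), of 0] by simp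
  have "hh (B + a 0) (\<lambda>i. a (Suc i)) = hh (B + a 0) (\<lambda>i. b (Suc i))"
    using Suc.prems(3) hh_rec[OF Suc.prems(1), of B] hh_rec[OF Suc.prems(2), of B] h0 C
    by (simp add: field_simps)
  from Suc.IH[OF pos_shift[OF Suc.prems(1)] pos_shift[OF Suc.prems(2)] this] show ?case .
qed

fun VV :: "nat \<Rightarrow> nat \<Rightarrow> nat \<Rightarrow> real set" where
  "VV d 0 B = {1/real(B+d) - 1/(real(B+d)*real(B+2*d)) ..
      1/real(B+d) - 1/(real(B+d)*real(B+2*d)) + 1/(real(B+d)*real(B+2*d)*real(B+3*d))}"
| "VV d (Suc n) B = (\<Union>c. {x. 1 - real (B + Suc c) * x \<in> VV d n (B + Suc c)})"

lemma VV_mem: "pos a \<Longrightarrow> a n = d \<Longrightarrow> a (Suc n) = d \<Longrightarrow> a (Suc (Suc n)) = d \<Longrightarrow> hh B a \<in> VV d n B"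
proof (induction n arbitrary: B a)
  case 0
  have c0: "cc B a 0 = 1/real(B+d)" using 0 by (simp add: cc_def)
  have s1: "(\<Sum>i\<le>Suc 0. a i) = 2*d" using 0 by simp
  have s2: "(\<Sum>i\<le>Suc (Suc 0). a i) = 3*d" using 0 by simp
  have c1: "cc B a (Suc 0) = 1/(real(B+d)*real(B+2*d))" using cc_Suc[of B a 0] c0 s1 by simp
  have c2: "cc B a (Suc (Suc 0)) = 1/(real(B+d)*real(B+2*d)*real(B+3*d))" using cc_Suc[of B a "Suc 0"] c1 s2 by simp
  show ?case using hh_lower1[OF 0(1), of B] hh_upper1[OF 0(1), of B] c0 c1 c2 by (simp add: numeral_2_eq_2)
next
  case (Suc n)
  have p': "pos (\<lambda>i. a (Suc i))" using pos_shift[OF Suc.prems(1)] .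
  have IH: "hh (B + a 0) (\<lambda>i. a (Suc i)) \<in> VV d n (B + a 0)"
    using Suc.IH[OF p'] Suc.prems by simp
  have C: "real (B + a 0) > 0" using pos_ge1[OF Suc.prems(1), of 0] by simp
  have e: "1 - real (B + a 0) * hh B a = hh (B + a 0) (\<lambda>i. a (Suc i))"
    using hh_rec[OF Suc.prems(1), of B] C by (simp add: field_simps)
  have h1: "1 \<le> a 0" using Suc.prems(1) unfolding pos_def by blast
  have ac: "a 0 = Suc (a 0 - 1)" using h1 by arith
  have m: "1 - real (B + Suc (a 0 - 1)) * hh B a \<in> VV d n (B + Suc (a 0 - 1))"
    using IH e by (simp only: ac[symmetric])
  show ?case using m by (simp only: VV.simps) blast
qed

lemma VV_borel: "VV d n B \<in> sets borel"
proof (induction n arbitrary: B)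
  case 0 then show ?case by simp
next
  case (Suc n)
  have "\<And>c. {x. 1 - real (B + Suc c) * x \<in> VV d n (B + Suc c)} \<in> sets borel"
  proof -
    fix c
    have m: "(\<lambda>x::real. 1 - real (B + Suc c) * x) \<in> borel_measurable borel" by simp
    have "(\<lambda>x::real. 1 - real (B + Suc c) * x) -` VV d n (B + Suc c) \<inter> space borel \<in> sets borel"
      using measurable_sets[OF m Suc.IH] .
    thus "{x. 1 - real (B + Suc c) * x \<in> VV d n (B + Suc c)} \<in> sets borel" by (simp add: vimage_def)
  qed
  thus ?case by auto
qed

lemma affine_meas:
  assumes C: "C > 0" and S: "S \<in> sets borel"
  shows "emeasure lborel S = ennreal C * emeasure lborel {x. 1 - C*x \<in> S}"
proof -
  let ?g = "\<lambda>x::real. 1 + (-C) * x"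
  have eq: "lborel = density (distr lborel borel ?g) (\<lambda>_. ennreal \<bar>-C\<bar>)"
    by (rule lborel_real_affine) (use C in simp)
  have "emeasure lborel S = emeasure (density (distr lborel borel ?g) (\<lambda>_. ennreal \<bar>-C\<bar>)) S"
    by (subst eq) (rule refl)
  also have "\<dots> = (\<integral>\<^sup>+ x. ennreal C * indicator S x \<partial>distr lborel borel ?g)"
    using S C by (subst emeasure_density) auto
  also have "\<dots> = ennreal C * emeasure (distr lborel borel ?g) S"
    using S by (subst nn_integral_cmult_indicator) auto
  also have "emeasure (distr lborel borel ?g) S = emeasure lborel (?g -` S \<inter> space lborel)"
    using S by (subst emeasure_distr) auto
  also have "?g -` S \<inter> space lborel = {x. 1 - C*x \<in> S}" by auto
  finally show ?thesis .
qed

lemma tele: "(\<lambda>c. 1/(real(B+c+1)*real(B+c+2))) sums (1/real(B+1))"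
proof -
  have l: "(\<lambda>c. 1 / real (B+c+1)) \<longlonglongrightarrow> 0"
    using LIMSEQ_ignore_initial_segment[OF lim_inverse_n', of "B+1"] by (simp add: add_ac)
  have "(\<lambda>c. 1 / real (B+c+1) - 1 / real (B + Suc c + 1)) sums (1 / real (B+0+1) - 0)"
    by (rule telescope_sums'[OF l])
  moreover have "\<And>c. 1 / real (B+c+1) - 1 / real (B + Suc c + 1) = 1/(real(B+c+1)*real(B+c+2))"
    by (simp add: field_simps)
  ultimately show ?thesis by simp
qed

lemma ennreal_div_bound:
  assumes "C > 0" "ennreal C * x \<le> ennreal y" "y \<ge> 0"
  shows "x \<le> ennreal (y / C)"
proof -
  have "x = ennreal (1/C) * (ennreal C * x)"
  proof -
    have "ennreal (1/C) * ennreal C = 1" using assms(1) by (simp add: ennreal_mult'[symmetric])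
    hence "x = (ennreal (1/C) * ennreal C) * x" by (simp only: mult_1)
    thus ?thesis by (simp only: mult.assoc)
  qed
  also have "\<dots> \<le> ennreal (1/C) * ennreal y" by (rule mult_left_mono[OF assms(2)]) simp
  also have "\<dots> = ennreal (y / C)" using assms by (simp add: ennreal_mult'[symmetric])
  finally show ?thesis .
qed

lemma VV_meas: "d \<ge> 1 \<Longrightarrow> emeasure lborel (VV d n B) \<le> ennreal (1 / (real (B+1) * real (B+n+1)^2))"
proof (induction n arbitrary: B)
  case 0
  let ?x = "real (B+d)" and ?y = "real (B+2*d)" and ?z = "real(B+3*d)"
  have xyz: "?x \<ge> real B + 1" "?y \<ge> real B + 1" "?z \<ge> real B + 1" using 0 by auto
  have "1/(?x*?y*?z) \<le> 1 / ((real B + 1) * (real B + 1) * (real B + 1))"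
    using xyz by (intro divide_left_mono mult_mono mult_pos_pos) auto
  also have "\<dots> = 1 / (real (B+1) * real (B+0+1)^2)" by (simp add: power2_eq_square mult.assoc add.commute)
  finally have le: "1/(?x*?y*?z) \<le> 1 / (real (B+1) * real (B+0+1)^2)" .
  have len: "emeasure lborel (VV d 0 B) = ennreal (1/(?x*?y*?z))"
    by (simp add: emeasure_lborel_Icc_eq)
  show ?case unfolding len using le by (rule ennreal_leI)
next
  case (Suc n)
  let ?A = "\<lambda>c. {x. 1 - real (B + Suc c) * x \<in> VV d n (B + Suc c)}"
  let ?K = "1 / real (B + n + 2)^2"
  let ?h = "\<lambda>c. 1/(real(B+c+1)*real(B+c+2))"
  have "emeasure lborel (VV d (Suc n) B) \<le> (\<Sum>c. emeasure lborel (?A c))"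
    using VV_borel[of d "Suc n" B] by (simp only: VV.simps) (rule emeasure_subadditive_countably, use VV_borel in auto)
  also have "\<dots> \<le> (\<Sum>c. ennreal (?K * ?h c))"
  proof (rule suminf_le)
    fix c
    let ?C = "real (B + Suc c)"
    have C: "?C > 0" by simp
    have "emeasure lborel (VV d n (B + Suc c)) = ennreal ?C * emeasure lborel (?A c)"
      by (rule affine_meas[OF C VV_borel])
    with Suc.IH[OF Suc.prems, of "B + Suc c"]
    have "ennreal ?C * emeasure lborel (?A c) \<le> ennreal (1 / (real (B + Suc c + 1) * real (B + Suc c + n + 1)^2))"
      by simp
    hence "emeasure lborel (?A c) \<le> ennreal ((1 / (real (B + Suc c + 1) * real (B + Suc c + n + 1)^2)) / ?C)"
      by (rule ennreal_div_bound[OF C]) simp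
    also have "\<dots> \<le> ennreal (?K * ?h c)"
    proof (rule ennreal_leI)
      have a: "real (B + Suc c + n + 1)^2 \<ge> real (B + n + 2)^2"
        by (rule power_mono) auto
      have "(1 / (real (B + Suc c + 1) * real (B + Suc c + n + 1)^2)) / ?C
          = 1 / (real (B + Suc c + n + 1)^2 * (real (B + c + 1) * real (B + c + 2)))"
        by (simp add: field_simps)
      also have "\<dots> \<le> 1 / (real (B + n + 2)^2 * (real (B + c + 1) * real (B + c + 2)))"
        using a by (intro divide_left_mono mult_right_mono mult_pos_pos) auto
      also have "\<dots> = ?K * ?h c" by simp
      finally show "(1 / (real (B + Suc c + 1) * real (B + Suc c + n + 1)^2)) / ?C \<le> ?K * ?h c" .
    qed
    finally show "emeasure lborel (?A c) \<le> ennreal (?K * ?h c)" .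
  qed auto
  also have "\<dots> = ennreal (?K * (1 / real (B+1)))"
  proof -
    have "(\<lambda>c. ?K * ?h c) sums (?K * (1 / real (B+1)))" by (rule sums_mult[OF tele])
    thus ?thesis
      by (subst suminf_ennreal2) (auto simp: sums_iff)
  qed
  also have "?K * (1 / real (B+1)) = 1 / (real (B+1) * real (B + Suc n + 1)^2)"
    by simp
  finally show ?case .
qed

lemma VV_tail: "d \<ge> 1 \<Longrightarrow> emeasure lborel (\<Union>n. VV d (Suc K + n) 0) \<le> ennreal (1 / real (K+1))"
proof -
  assume d: "d \<ge> 1"
  let ?h = "\<lambda>c. 1/(real(K+c+1)*real(K+c+2))"
  have "emeasure lborel (\<Union>n. VV d (Suc K + n) 0) \<le> (\<Sum>n. emeasure lborel (VV d (Suc K + n) 0))"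
    by (rule emeasure_subadditive_countably) (use VV_borel in auto)
  also have "\<dots> \<le> (\<Sum>n. ennreal (?h n))"
  proof (rule suminf_le)
    fix n
    have "emeasure lborel (VV d (Suc K + n) 0) \<le> ennreal (1 / (real (0+1) * real (0 + (Suc K + n) + 1)^2))"
      by (rule VV_meas[OF d])
    also have "\<dots> \<le> ennreal (?h n)"
    proof (rule ennreal_leI)
      have "real (K+n+1) * real (K+n+2) \<le> real (0 + (Suc K + n) + 1)^2"
        by (simp add: power2_eq_square)
      hence "1 / (real (0 + (Suc K + n) + 1)^2) \<le> ?h n"
        by (intro divide_left_mono) auto
      thus "1 / (real (0+1) * real (0 + (Suc K + n) + 1)^2) \<le> ?h n" by simp
    qed
    finally show "emeasure lborel (VV d (Suc K + n) 0) \<le> ennreal (?h n)" .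
  qed auto
  also have "\<dots> = ennreal (1 / real (K+1))"
    using tele[of K] by (subst suminf_ennreal2) (auto simp: sums_iff)
  finally show ?thesis .
qed

lemma (in prob_space) alt_meas:
  assumes Xm[measurable]: "\<And>k. X k \<in> measurable M (count_space UNIV)"
    and pos: "\<And>k \<omega>. \<omega> \<in> space M \<Longrightarrow> X k \<omega> \<ge> 1"
  shows "(\<lambda>\<omega>. alt_series (\<lambda>k. X k \<omega>)) \<in> borel_measurable M"
proof (rule borel_measurable_LIMSEQ_real)
  fix \<omega> assume w: "\<omega> \<in> space M"
  have p: "pos (\<lambda>k. X k \<omega>)" using pos[OF w] by (simp add: pos_def)
  show "(\<lambda>i. \<Sum>k<i. (-1)^k * cc 0 (\<lambda>k. X k \<omega>) k) \<longlonglongrightarrow> alt_series (\<lambda>k. X k \<omega>)"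
    unfolding alt_series_hh hh_def using summable_LIMSEQ[OF hh_summable[OF p]] .
next
  fix i
  have Xr: "\<And>l. (\<lambda>\<omega>. real (X l \<omega>)) \<in> borel_measurable M"
    by (rule measurable_compose[OF Xm borel_measurable_count_space])
  have S: "\<And>j. (\<lambda>\<omega>. real (0 + (\<Sum>l\<le>j. X l \<omega>))) \<in> borel_measurable M"
    by (simp only: add_0 of_nat_sum) (intro borel_measurable_sum Xr)
  have P: "\<And>k. (\<lambda>\<omega>. \<Prod>j\<le>k. real (0 + (\<Sum>l\<le>j. X l \<omega>))) \<in> borel_measurable M"
    by (intro borel_measurable_prod S)
  show "(\<lambda>\<omega>. \<Sum>k<i. (-1)^k * cc 0 (\<lambda>k. X k \<omega>) k) \<in> borel_measurable M"
    unfolding cc_def by (intro borel_measurable_sum borel_measurable_times borel_measurable_const borel_measurable_divide P)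
qed

lemma (in prob_space) block_AE:
  assumes Xm[measurable]: "\<And>k. X k \<in> measurable M (count_space UNIV)"
    and ind: "indep_vars (\<lambda>_. count_space UNIV) X UNIV"
    and dist: "\<And>k. distr M (count_space UNIV) (X k) = distr M (count_space UNIV) (X 0)"
    and p: "prob (X 0 -` {d} \<inter> space M) > 0"
  shows "AE \<omega> in M. \<exists>n. X (Mo+n) \<omega> = d \<and> X (Suc (Mo+n)) \<omega> = d \<and> X (Suc (Suc (Mo+n))) \<omega> = d"
proof -
  let ?p = "prob (X 0 -` {d} \<inter> space M)"
  have pi: "\<And>i. prob (X i -` {d} \<inter> space M) = ?p"
  proof -
    fix i
    have "prob (X i -` {d} \<inter> space M) = measure (distr M (count_space UNIV) (X i)) {d}"
      by (subst measure_distr) auto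
    also have "\<dots> = measure (distr M (count_space UNIV) (X 0)) {d}" by (rule arg_cong[where f="\<lambda>N. measure N {d}"], rule dist)
    also have "\<dots> = ?p" by (subst measure_distr) auto
    finally show "prob (X i -` {d} \<inter> space M) = ?p" .
  qed
  define Ks where "Ks m = {Mo+3*m, Mo+3*m+1, Mo+3*m+2}" for m
  define Z where "Z m \<omega> = (X (Mo+3*m) \<omega> = d \<and> X (Mo+3*m+1) \<omega> = d \<and> X (Mo+3*m+2) \<omega> = d)" for m \<omega>
  have dj: "disjoint_family_on Ks UNIV"
    unfolding disjoint_family_on_def Ks_def by auto
  have indR: "indep_vars (\<lambda>j. PiM (Ks j) (\<lambda>_. count_space UNIV)) (\<lambda>j \<omega>. restrict (\<lambda>i. X i \<omega>) (Ks j)) UNIV"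
    by (rule indep_vars_restrict[OF ind _ dj]) auto
  have indY: "indep_vars (\<lambda>_. count_space UNIV)
     (\<lambda>j \<omega>. (\<lambda>f. f (Mo+3*j) = d \<and> f (Mo+3*j+1) = d \<and> f (Mo+3*j+2) = d) (restrict (\<lambda>i. X i \<omega>) (Ks j))) UNIV"
  proof (rule indep_vars_compose2[OF indR])
    fix j :: nat
    have [simp]: "Mo+3*j \<in> Ks j" "Mo+3*j+1 \<in> Ks j" "Mo+3*j+2 \<in> Ks j" by (auto simp: Ks_def)
    show "(\<lambda>f. f (Mo+3*j) = d \<and> f (Mo+3*j+1) = d \<and> f (Mo+3*j+2) = d) \<in> measurable (PiM (Ks j) (\<lambda>_. count_space UNIV)) (count_space UNIV)"
    proof -
      have c: "\<And>i. i \<in> Ks j \<Longrightarrow> Measurable.pred (PiM (Ks j) (\<lambda>_. count_space UNIV)) (\<lambda>f. f i = d)"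
      proof -
        fix i assume i: "i \<in> Ks j"
        have a: "(\<lambda>f. f i) \<in> measurable (PiM (Ks j) (\<lambda>_. count_space UNIV)) (count_space UNIV)"
          by (rule measurable_component_singleton[OF i])
        have b: "(\<lambda>x. x = d) \<in> measurable (count_space UNIV) (count_space UNIV)" by simp
        show "Measurable.pred (PiM (Ks j) (\<lambda>_. count_space UNIV)) (\<lambda>f. f i = d)"
          using measurable_compose[OF a b] by simp
      qed
      show ?thesis by (intro pred_intros_logic c) (auto simp: Ks_def)
    qed
  qed
  have indZ: "indep_vars (\<lambda>_. count_space UNIV) Z UNIV"
    using indY by (rule iffD1[OF indep_vars_cong, rotated 3]) (auto simp: Z_def Ks_def fun_eq_iff)
  have Zm[measurable]: "\<And>m. Measurable.pred M (Z m)" unfolding Z_def by measurable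
  have ZT: "\<And>m. prob (Z m -` {True} \<inter> space M) = ?p ^ 3"
  proof -
    fix m
    have "Z m -` {True} \<inter> space M = (\<Inter>i\<in>Ks m. X i -` {d} \<inter> space M)"
      unfolding Z_def Ks_def by (simp add: set_eq_iff) blast
    also have "prob \<dots> = (\<Prod>i\<in>Ks m. prob (X i -` {d} \<inter> space M))"
      by (rule indep_varsD[OF ind]) (simp_all add: Ks_def)
    also have "\<dots> = (\<Prod>i\<in>Ks m. ?p)" by (rule prod.cong[OF refl pi])
    also have "\<dots> = ?p ^ 3" by (simp add: Ks_def power3_eq_cube mult.assoc)
    finally show "prob (Z m -` {True} \<inter> space M) = ?p ^ 3" .
  qed
  have ZF: "\<And>m. prob (Z m -` {False} \<inter> space M) = 1 - ?p ^ 3"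
  proof -
    fix m
    have "Z m -` {False} \<inter> space M = space M - (Z m -` {True} \<inter> space M)" by auto
    moreover have "Z m -` {True} \<inter> space M \<in> events" by measurable
    ultimately show "prob (Z m -` {False} \<inter> space M) = 1 - ?p ^ 3" using ZT prob_compl by simp
  qed
  define E where "E = {\<omega>\<in>space M. \<forall>m. \<not> Z m \<omega>}"
  have Em: "E \<in> events" unfolding E_def by measurable
  have Ele: "\<And>K. emeasure M E \<le> ennreal ((1 - ?p^3) ^ Suc K)"
  proof -
    fix K
    have "E \<subseteq> (\<Inter>m\<in>{..<Suc K}. Z m -` {False} \<inter> space M)" by (auto simp: E_def)
    moreover have Fm: "\<And>m. Z m -` {False} \<inter> space M \<in> events" by measurable
    moreover have "(\<Inter>m\<in>{..<Suc K}. Z m -` {False} \<inter> space M) \<in> events"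
      by (rule sets.finite_INT) (auto intro: Fm)
    ultimately have "emeasure M E \<le> emeasure M (\<Inter>m\<in>{..<Suc K}. Z m -` {False} \<inter> space M)"
      by (intro emeasure_mono)
    also have "\<dots> = ennreal (prob (\<Inter>m\<in>{..<Suc K}. Z m -` {False} \<inter> space M))"
      by (simp add: emeasure_eq_measure)
    also have "prob (\<Inter>m\<in>{..<Suc K}. Z m -` {False} \<inter> space M) = (\<Prod>m\<in>{..<Suc K}. prob (Z m -` {False} \<inter> space M))"
      by (rule indep_varsD[OF indZ]) auto
    also have "\<dots> = (1 - ?p^3) ^ Suc K" by (simp add: ZF)
    finally show "emeasure M E \<le> ennreal ((1 - ?p^3) ^ Suc K)" .
  qed
  have q: "0 \<le> 1 - ?p^3" "1 - ?p^3 < 1"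
    using p prob_le_1[of "X 0 -` {d} \<inter> space M"] by (auto simp: power_le_one)
  have "(\<lambda>K. ennreal ((1 - ?p^3) ^ Suc K)) \<longlonglongrightarrow> ennreal 0"
    by (rule tendsto_ennrealI, rule LIMSEQ_Suc, rule LIMSEQ_power_zero) (use q in simp)
  hence "emeasure M E \<le> ennreal 0"
    by (rule LIMSEQ_le_const) (use Ele in auto)
  hence En: "E \<in> null_sets M" using Em by auto
  show ?thesis
  proof (rule AE_I'[OF En])
    show "{\<omega> \<in> space M. \<not> (\<exists>n. X (Mo+n) \<omega> = d \<and> X (Suc (Mo+n)) \<omega> = d \<and> X (Suc (Suc (Mo+n))) \<omega> = d)} \<subseteq> E"
    proof safe
      fix \<omega> assume w: "\<omega> \<in> space M" and nb: "\<not> (\<exists>n. X (Mo+n) \<omega> = d \<and> X (Suc (Mo+n)) \<omega> = d \<and> X (Suc (Suc (Mo+n))) \<omega> = d)"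
      have "\<forall>m. \<not> Z m \<omega>"
      proof
        fix m show "\<not> Z m \<omega>" using nb[simplified, rule_format, of "3*m"] by (auto simp: Z_def add.assoc)
      qed
      thus "\<omega> \<in> E" using w by (simp add: E_def)
    qed
  qed
qed

lemma (in prob_space) prob_same:
  assumes Xm[measurable]: "\<And>k. X k \<in> measurable M (count_space UNIV)"
    and dist: "\<And>k. distr M (count_space UNIV) (X k) = distr M (count_space UNIV) (X 0)"
  shows "prob (X i -` {v} \<inter> space M) = prob (X 0 -` {v} \<inter> space M)"
proof -
  have "prob (X i -` {v} \<inter> space M) = measure (distr M (count_space UNIV) (X i)) {v}"
    by (subst measure_distr) auto
  also have "\<dots> = measure (distr M (count_space UNIV) (X 0)) {v}" by (rule arg_cong[where f="\<lambda>N. measure N {v}"], rule dist)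
  also have "\<dots> = prob (X 0 -` {v} \<inter> space M)" by (subst measure_distr) auto
  finally show ?thesis .
qed

theorem mainTheorem8:
  fixes M :: "'a measure" and X :: "nat \<Rightarrow> 'a \<Rightarrow> nat"
  assumes "prob_space M"
    and "\<And>k. X k \<in> measurable M (count_space UNIV)"
    and "\<And>k \<omega>. \<omega> \<in> space M \<Longrightarrow> X k \<omega> \<ge> 1"
    and "prob_space.indep_vars M (\<lambda>_. count_space UNIV) X UNIV"
    and "\<And>k. distr M (count_space UNIV) (X k) = distr M (count_space UNIV) (X 0)"
  shows "(purely_discrete (distr M borel (\<lambda>\<omega>. alt_series (\<lambda>k. X k \<omega>)))
          \<or> purely_singular_continuous (distr M borel (\<lambda>\<omega>. alt_series (\<lambda>k. X k \<omega>))))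
         \<and> \<not> absolutely_continuous lborel (distr M borel (\<lambda>\<omega>. alt_series (\<lambda>k. X k \<omega>)))"
proof -
  interpret P: prob_space M by fact
  note Xm[measurable] = assms(2)
  define \<eta> where "\<eta> \<omega> = alt_series (\<lambda>k. X k \<omega>)" for \<omega>
  have \<eta>m[measurable]: "\<eta> \<in> borel_measurable M" unfolding \<eta>_def by (rule P.alt_meas[OF assms(2,3)])
  have posw: "\<And>\<omega>. \<omega> \<in> space M \<Longrightarrow> pos (\<lambda>k. X k \<omega>)" using assms(3) by (simp add: pos_def)
  have \<mu>_eq: "\<And>A. A \<in> sets borel \<Longrightarrow> emeasure (distr M borel \<eta>) A = emeasure M (\<eta> -` A \<inter> space M)"
    by (rule emeasure_distr) auto
  have \<mu>U: "emeasure (distr M borel \<eta>) UNIV = 1"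
    using \<mu>_eq[of UNIV] by (simp add: P.emeasure_space_1)
  have qs: "\<And>i v. P.prob (X i -` {v} \<inter> space M) = P.prob (X 0 -` {v} \<inter> space M)"
    by (rule P.prob_same[of X, OF assms(2) assms(5)])
  have "\<exists>d. P.prob (X 0 -` {d} \<inter> space M) > 0"
  proof (rule ccontr)
    assume "\<not> ?thesis"
    hence z: "\<And>w. P.prob (X 0 -` {w} \<inter> space M) = 0" by (meson not_less antisym measure_nonneg)
    have sp: "space M = (\<Union>w. X 0 -` {w} \<inter> space M)" by auto
    have ms: "range (\<lambda>w. X 0 -` {w} \<inter> space M) \<subseteq> sets M"
      using measurable_sets[OF Xm[of 0]] by auto
    have "emeasure M (\<Union>w. X 0 -` {w} \<inter> space M) \<le> (\<Sum>w. emeasure M (X 0 -` {w} \<inter> space M))"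
      by (rule emeasure_subadditive_countably[OF ms])
    hence "emeasure M (space M) \<le> (\<Sum>w. emeasure M (X 0 -` {w} \<inter> space M))"
      by (simp only: sp[symmetric])
    also have "\<dots> = 0" using z by (simp add: P.emeasure_eq_measure)
    finally show False using P.emeasure_space_1 by simp
  qed
  then obtain d where dpos: "P.prob (X 0 -` {d} \<inter> space M) > 0" by blast
  have d1: "d \<ge> 1"
  proof -
    have "X 0 -` {d} \<inter> space M \<noteq> {}" using dpos by auto
    then obtain \<omega> where "\<omega> \<in> space M" "X 0 \<omega> = d" by auto
    thus ?thesis using assms(3) by metis
  qed
  define N where "N = (\<Inter>K. \<Union>n. VV d (Suc K + n) 0)"
  have Nb: "N \<in> sets borel" unfolding N_def using VV_borel by blast
  have Nnull: "emeasure lborel N = 0"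
  proof -
    have le: "\<And>K. emeasure lborel N \<le> ennreal (1 / real (K+1))"
    proof -
      fix K
      have "N \<subseteq> (\<Union>n. VV d (Suc K + n) 0)" unfolding N_def by blast
      hence "emeasure lborel N \<le> emeasure lborel (\<Union>n. VV d (Suc K + n) 0)"
        by (rule emeasure_mono) (use VV_borel in auto)
      also have "\<dots> \<le> ennreal (1 / real (K+1))" by (rule VV_tail[OF d1])
      finally show "emeasure lborel N \<le> ennreal (1 / real (K+1))" .
    qed
    have "(\<lambda>K. ennreal (1 / real (K+1))) \<longlonglongrightarrow> ennreal 0"
      by (rule tendsto_ennrealI) (use LIMSEQ_Suc[OF lim_inverse_n'] in simp)
    hence "emeasure lborel N \<le> ennreal 0" by (rule LIMSEQ_le_const) (use le in auto)
    thus ?thesis by simp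
  qed
  have AEN: "AE \<omega> in M. \<eta> \<omega> \<in> N"
  proof -
    have "\<And>K. AE \<omega> in M. \<eta> \<omega> \<in> (\<Union>n. VV d (Suc K + n) 0)"
    proof -
      fix K
      have b: "AE \<omega> in M. \<exists>n. X (Suc K+n) \<omega> = d \<and> X (Suc (Suc K+n)) \<omega> = d \<and> X (Suc (Suc (Suc K+n))) \<omega> = d"
        by (rule P.block_AE[OF assms(2) assms(4) assms(5) dpos])
      show "AE \<omega> in M. \<eta> \<omega> \<in> (\<Union>n. VV d (Suc K + n) 0)"
        using b AE_space
      proof eventually_elim
        case (elim \<omega>)
        then obtain n where n: "X (Suc K+n) \<omega> = d" "X (Suc (Suc K+n)) \<omega> = d" "X (Suc (Suc (Suc K+n))) \<omega> = d" by blast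
        have "hh 0 (\<lambda>k. X k \<omega>) \<in> VV d (Suc K + n) 0"
          by (rule VV_mem[OF posw[OF elim(2)]]) (use n in auto)
        thus ?case by (auto simp: \<eta>_def alt_series_hh)
      qed
    qed
    hence "AE \<omega> in M. \<forall>K. \<eta> \<omega> \<in> (\<Union>n. VV d (Suc K + n) 0)" by (simp add: AE_all_countable)
    thus ?thesis by eventually_elim (simp add: N_def)
  qed
  have \<mu>N: "emeasure (distr M borel \<eta>) N = 1"
  proof -
    have "emeasure M (\<eta> -` N \<inter> space M) = 1"
      by (rule P.emeasure_eq_1_AE) (use Nb AEN in \<open>auto intro: measurable_sets[OF \<eta>m] elim: AE_mp\<close>)
    thus ?thesis using \<mu>_eq[OF Nb] by simp
  qed
  have notAC: "\<not> absolutely_continuous lborel (distr M borel \<eta>)"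
  proof
    assume "absolutely_continuous lborel (distr M borel \<eta>)"
    moreover have "N \<in> null_sets lborel" using Nb Nnull by auto
    ultimately have "N \<in> null_sets (distr M borel \<eta>)" unfolding absolutely_continuous_def by blast
    thus False using \<mu>N by auto
  qed
  have pure: "purely_discrete (distr M borel \<eta>) \<or> purely_singular_continuous (distr M borel \<eta>)"
  proof (cases "\<exists>w. P.prob (X 0 -` {w} \<inter> space M) = 1")
    case True
    then obtain w where w: "P.prob (X 0 -` {w} \<inter> space M) = 1" by blast
    have "\<And>k. AE \<omega> in M. \<omega> \<in> X k -` {w} \<inter> space M"
      by (rule P.AE_prob_1) (rule trans[OF qs w])
    hence "AE \<omega> in M. \<forall>k. \<omega> \<in> X k -` {w} \<inter> space M" by (simp only: AE_all_countable) blast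
    hence AEw: "AE \<omega> in M. \<eta> \<omega> \<in> {alt_series (\<lambda>_. w)}"
      by eventually_elim (simp add: \<eta>_def)
    have "emeasure (distr M borel \<eta>) {alt_series (\<lambda>_. w)} = 1"
    proof -
      have "emeasure M (\<eta> -` {alt_series (\<lambda>_. w)} \<inter> space M) = 1"
        by (rule P.emeasure_eq_1_AE) (use AEw in \<open>auto intro: measurable_sets[OF \<eta>m] elim: AE_mp\<close>)
      thus ?thesis using \<mu>_eq[of "{alt_series (\<lambda>_. w)}"] by simp
    qed
    hence "purely_discrete (distr M borel \<eta>)"
      unfolding purely_discrete_def using \<mu>U by (intro exI[of _ "{alt_series (\<lambda>_. w)}"]) simp
    thus ?thesis ..
  next
    case False
    let ?q = "\<lambda>v. P.prob (X 0 -` {v} \<inter> space M)"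
    have qlt: "\<And>v. ?q v < 1" using False P.prob_le_1 by (meson less_eq_real_def)
    have uniq: "\<And>w1 w2. ?q w1 > 1/2 \<Longrightarrow> ?q w2 > 1/2 \<Longrightarrow> w1 = w2"
    proof (rule ccontr)
      fix w1 w2 assume h: "?q w1 > 1/2" "?q w2 > 1/2" "w1 \<noteq> w2"
      have "P.prob ((X 0 -` {w1} \<inter> space M) \<union> (X 0 -` {w2} \<inter> space M)) = ?q w1 + ?q w2"
        by (rule P.finite_measure_Union) (use h(3) measurable_sets[OF Xm[of 0]] in auto)
      thus False using h P.prob_le_1 by (metis add_strict_mono field_sum_of_halves not_le)
    qed
    define \<rho> where "\<rho> = (if \<exists>w. ?q w > 1/2 then ?q (SOME w. ?q w > 1/2) else 1/2)"
    have \<rho>lt: "\<rho> < 1" unfolding \<rho>_def using qlt by auto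
    have \<rho>0: "0 \<le> \<rho>" unfolding \<rho>_def by auto
    have qle: "\<And>v. ?q v \<le> \<rho>"
    proof -
      fix v show "?q v \<le> \<rho>"
      proof (cases "?q v > 1/2")
        case True
        hence ex: "\<exists>w. ?q w > 1/2" by blast
        have "?q (SOME w. ?q w > 1/2) > 1/2" by (rule someI_ex[OF ex])
        hence "(SOME w. ?q w > 1/2) = v" using True uniq by blast
        thus ?thesis unfolding \<rho>_def using ex by simp
      next
        case False
        show ?thesis
        proof (cases "\<exists>w. ?q w > 1/2")
          case ex: True
          have "?q (SOME w. ?q w > 1/2) > 1/2" by (rule someI_ex[OF ex])
          thus ?thesis using False ex unfolding \<rho>_def by simp
        next
          case nex: False
          have r: "\<rho> = 1/2" using nex unfolding \<rho>_def by simp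
          have "?q v \<le> 1/2" using nex by (simp add: not_less)
          thus ?thesis using r by simp
        qed
      qed
    qed
    have atoms: "\<And>x. emeasure (distr M borel \<eta>) {x} = 0"
    proof -
      fix x
      show "emeasure (distr M borel \<eta>) {x} = 0"
      proof (cases "\<eta> -` {x} \<inter> space M = {}")
        case True thus ?thesis using \<mu>_eq[of "{x}"] by simp
      next
        case False
        then obtain \<omega>0 where w0: "\<omega>0 \<in> space M" "\<eta> \<omega>0 = x" by auto
        let ?a = "\<lambda>k. X k \<omega>0"
        have le: "\<And>K. emeasure M (\<eta> -` {x} \<inter> space M) \<le> ennreal (\<rho> ^ Suc K)"
        proof -
          fix K
          have sub: "\<eta> -` {x} \<inter> space M \<subseteq> (\<Inter>k\<in>{..<Suc K}. X k -` {?a k} \<inter> space M)"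
          proof
            fix \<omega> assume "\<omega> \<in> \<eta> -` {x} \<inter> space M"
            hence w: "\<omega> \<in> space M" "\<eta> \<omega> = \<eta> \<omega>0" using w0 by auto
            have "hh 0 (\<lambda>k. X k \<omega>) = hh 0 ?a" using w(2) by (simp add: \<eta>_def alt_series_hh)
            hence "\<And>k. X k \<omega> = ?a k" using hh_inj[OF posw[OF w(1)] posw[OF w0(1)]] by blast
            thus "\<omega> \<in> (\<Inter>k\<in>{..<Suc K}. X k -` {?a k} \<inter> space M)" using w by auto
          qed
          have Fm: "\<And>k. X k -` {?a k} \<inter> space M \<in> sets M" using measurable_sets[OF Xm] by auto
          have Im: "(\<Inter>k\<in>{..<Suc K}. X k -` {?a k} \<inter> space M) \<in> sets M"
            by (rule sets.finite_INT) (auto intro: Fm)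
          have "emeasure M (\<eta> -` {x} \<inter> space M) \<le> emeasure M (\<Inter>k\<in>{..<Suc K}. X k -` {?a k} \<inter> space M)"
            by (rule emeasure_mono[OF sub Im])
          also have "\<dots> = ennreal (P.prob (\<Inter>k\<in>{..<Suc K}. X k -` {?a k} \<inter> space M))"
            by (simp add: P.emeasure_eq_measure)
          also have "P.prob (\<Inter>k\<in>{..<Suc K}. X k -` {?a k} \<inter> space M) = (\<Prod>k\<in>{..<Suc K}. P.prob (X k -` {?a k} \<inter> space M))"
            by (rule P.indep_varsD[OF assms(4)]) auto
          also have "\<dots> = (\<Prod>k\<in>{..<Suc K}. ?q (?a k))" by (rule prod.cong[OF refl qs])
          also have "\<dots> \<le> (\<Prod>k\<in>{..<Suc K}. \<rho>)" by (rule prod_mono) (use qle in auto)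
          also have "\<dots> = \<rho> ^ Suc K" by simp
          finally show "emeasure M (\<eta> -` {x} \<inter> space M) \<le> ennreal (\<rho> ^ Suc K)" by (simp add: ennreal_leI)
        qed
        have "(\<lambda>K. ennreal (\<rho> ^ Suc K)) \<longlonglongrightarrow> ennreal 0"
          by (rule tendsto_ennrealI, rule LIMSEQ_Suc, rule LIMSEQ_power_zero) (use \<rho>lt \<rho>0 in simp)
        hence "emeasure M (\<eta> -` {x} \<inter> space M) \<le> ennreal 0" by (rule LIMSEQ_le_const) (use le in auto)
        thus ?thesis using \<mu>_eq[of "{x}"] by simp
      qed
    qed
    have "purely_singular_continuous (distr M borel \<eta>)"
      unfolding purely_singular_continuous_def using atoms Nb Nnull \<mu>N \<mu>U by auto
    thus ?thesis ..
  qed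
  show ?thesis using pure notAC unfolding \<eta>_def by blast
qed

end
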